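(* Let $\alpha>0$, $A\ge0$, $B>0$, $t>0$, $w_0(x)=x^\alpha e^{-x}$ on $[0,\infty)$, $\mathsf{v}_0(x)=x-\alpha\ln x$, and $w(x)=w_0(x)(A+B\theta(x-t))$. Let $P_n(z)=P_n(z,t)$ be the monic polynomials orthogonal w.r.t. $w$ on $[0,\infty)$ with $\int_0^\infty P_iP_jw\,dx=\delta_{ij}h_j(t)$. Define $$A_n(z):=\frac{R_n(t)}{z-t}+\frac{1}{h_n}\int_0^\infty\frac{\mathsf{v}_0'(z)-\mathsf{v}_0'(y)}{z-y}P_n^2(y)w(y)\,dy,\quad B_n(z):=\frac{r_n(t)}{z-t}+\frac{1}{h_{n-1}}\int_0^\infty\frac{\mathsf{v}_0'(z)-\mathsf{v}_0'(y)}{z-y}P_n(y)P_{n-1}(y)w(y)\,dy,$$ where $R_n(t):=Bw_0(t)\{P_n(t,t)\}^2/h_n(t)$ and $r_n(t):=Bw_0(t)P_n(t,t)P_{n-1}(t,t)/h_{n-1}(t)$. Then (for $n\ge1$) $$A_n(z)=\frac{R_n(t)}{z-t}+\frac{1-R_n(t)}{z},\qquad B_n(z)=\frac{r_n(t)}{z-t}-\frac{n+r_n(t)}{z}.$$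
   Context: $\theta$ is the Heaviside function ($1$ for $x>0$, $0$ otherwise); $P_n(t,t)$ denotes $P_n(z,t)$ evaluated at $z=t$. *)

theory Defs
  imports "HOL-Analysis.Analysis" "HOL-Computational_Algebra.Polynomial"
begin

definition heaviside :: "real \<Rightarrow> real" where
  "heaviside x = (if x > 0 then 1 else 0)"

definition w0 :: "real \<Rightarrow> real \<Rightarrow> real" where
  "w0 \<alpha> x = x powr \<alpha> * exp (- x)"

definition v0 :: "real \<Rightarrow> real \<Rightarrow> real" where
  "v0 \<alpha> x = x - \<alpha> * ln x"

definition v0' :: "real \<Rightarrow> complex \<Rightarrow> complex" where
  "v0' \<alpha> z = 1 - complex_of_real \<alpha> / z"

definition wt :: "real \<Rightarrow> real \<Rightarrow> real \<Rightarrow> real \<Rightarrow> real \<Rightarrow> real" where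
  "wt \<alpha> A B t x = w0 \<alpha> x * (A + B * heaviside (x - t))"

definition monic_OPS :: "real \<Rightarrow> real \<Rightarrow> real \<Rightarrow> real \<Rightarrow> (nat \<Rightarrow> real poly) \<Rightarrow> bool" where
  "monic_OPS \<alpha> A B t P \<longleftrightarrow>
     (\<forall>n. degree (P n) = n \<and> lead_coeff (P n) = 1) \<and>
     (\<forall>i j. i \<noteq> j \<longrightarrow>
        (LINT x:{0..}|lborel. poly (P i) x * poly (P j) x * wt \<alpha> A B t x) = 0)"

definition hn :: "real \<Rightarrow> real \<Rightarrow> real \<Rightarrow> real \<Rightarrow> (nat \<Rightarrow> real poly) \<Rightarrow> nat \<Rightarrow> real" where
  "hn \<alpha> A B t P n = (LINT x:{0..}|lborel. (poly (P n) x)\<^sup>2 * wt \<alpha> A B t x)"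

definition Rn :: "real \<Rightarrow> real \<Rightarrow> real \<Rightarrow> real \<Rightarrow> (nat \<Rightarrow> real poly) \<Rightarrow> nat \<Rightarrow> real" where
  "Rn \<alpha> A B t P n = B * w0 \<alpha> t * (poly (P n) t)\<^sup>2 / hn \<alpha> A B t P n"

definition rn :: "real \<Rightarrow> real \<Rightarrow> real \<Rightarrow> real \<Rightarrow> (nat \<Rightarrow> real poly) \<Rightarrow> nat \<Rightarrow> real" where
  "rn \<alpha> A B t P n = B * w0 \<alpha> t * poly (P n) t * poly (P (n - 1)) t / hn \<alpha> A B t P (n - 1)"

definition An :: "real \<Rightarrow> real \<Rightarrow> real \<Rightarrow> real \<Rightarrow> (nat \<Rightarrow> real poly) \<Rightarrow> nat \<Rightarrow> complex \<Rightarrow> complex" where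
  "An \<alpha> A B t P n z =
     complex_of_real (Rn \<alpha> A B t P n) / (z - complex_of_real t)
     + (1 / complex_of_real (hn \<alpha> A B t P n)) *
       (LINT y:{0..}|lborel. ((v0' \<alpha> z - v0' \<alpha> (complex_of_real y)) / (z - complex_of_real y))
            * complex_of_real ((poly (P n) y)\<^sup>2 * wt \<alpha> A B t y))"

definition Bn :: "real \<Rightarrow> real \<Rightarrow> real \<Rightarrow> real \<Rightarrow> (nat \<Rightarrow> real poly) \<Rightarrow> nat \<Rightarrow> complex \<Rightarrow> complex" where
  "Bn \<alpha> A B t P n z =
     complex_of_real (rn \<alpha> A B t P n) / (z - complex_of_real t)
     + (1 / complex_of_real (hn \<alpha> A B t P (n - 1))) *
       (LINT y:{0..}|lborel. ((v0' \<alpha> z - v0' \<alpha> (complex_of_real y)) / (z - complex_of_real y))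
            * complex_of_real (poly (P n) y * poly (P (n - 1)) y * wt \<alpha> A B t y))"

end

theory Submission imports Defs begin

lemma int_pow:
  fixes s :: real assumes "s > -1"
  shows "set_integrable lborel {0..} (\<lambda>y. y powr s * exp (-y))"
proof -
  have s: "s + 1 > 0" using assms by simp
  have eq: "(\<lambda>y. indicator {0..} y *\<^sub>R (y powr s * exp (-y))) =
        (\<lambda>y. indicator {0..} y * y powr (s + 1 - 1) / exp y)"
    by (auto simp: exp_minus field_simps indicator_def)
  show ?thesis
    unfolding set_integrable_def eq
    apply (rule integrableI_nonneg)
    using Gamma_conv_nn_integral_real[OF s, symmetric]
    by (auto simp: indicator_def)
qed

lemma int_E:
  fixes b :: real and q :: "real poly" assumes "b > -1"
  shows "set_integrable lborel {0..} (\<lambda>y. y powr b * poly q y * exp (-y))"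
proof -
  have I: "set_integrable lborel {0..} (\<lambda>y. \<Sum>i\<le>degree q. coeff q i * (y powr (b + real i) * exp (-y)))"
  proof -
    have "\<And>i. set_integrable lborel {0..} (\<lambda>y. coeff q i * (y powr (b + real i) * exp (-y)))"
      using int_pow assms by (intro set_integrable_mult_right) simp
    then show ?thesis unfolding set_integrable_def real_scaleR_def sum_distrib_left
      by (intro Bochner_Integration.integrable_sum) auto
  qed
  have E: "y powr b * poly q y * exp (-y) = (\<Sum>i\<le>degree q. coeff q i * (y powr (b + real i) * exp (-y)))"
    if "y \<in> {0..}" for y
  proof (cases "y = 0")
    case True then show ?thesis by simp
  next
    case False
    then have "y > 0" using that by simp
    then show ?thesis
      by (simp add: poly_altdef sum_distrib_left sum_distrib_right powr_add powr_realpow algebra_simps)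
  qed
  have "set_integrable lborel {0..} (\<lambda>y. y powr b * poly q y * exp (-y)) =
    set_integrable lborel {0..} (\<lambda>y. \<Sum>i\<le>degree q. coeff q i * (y powr (b + real i) * exp (-y)))"
    by (rule set_integrable_cong) (simp_all only: E refl)
  then show ?thesis using I by simp
qed

lemma lim_pow: "((\<lambda>y::real. y powr s * exp (-y)) \<longlongrightarrow> 0) at_top"
proof (rule real_tendsto_sandwich[where f="\<lambda>_. 0" and h="\<lambda>y. y ^ nat \<lceil>s\<rceil> / exp y"])
  show "\<forall>\<^sub>F y in at_top. 0 \<le> y powr s * exp (- y)" by simp
  show "\<forall>\<^sub>F y in at_top. y powr s * exp (- y) \<le> y ^ nat \<lceil>s\<rceil> / exp y"
    using eventually_ge_at_top[of 1]
  proof eventually_elim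
    case (elim y)
    have "y powr s \<le> y powr real (nat \<lceil>s\<rceil>)" by (rule powr_mono) (use elim real_nat_ceiling_ge in auto)
    also have "\<dots> = y ^ nat \<lceil>s\<rceil>" using elim by (simp add: powr_realpow)
    finally have "y powr s \<le> y ^ nat \<lceil>s\<rceil>" .
    then show ?case unfolding exp_minus divide_inverse
      by (rule mult_right_mono) simp
  qed
qed (rule tendsto_const, rule tendsto_power_div_exp_0)

lemma lim_E: "((\<lambda>y::real. y powr a * poly q y * exp (-y)) \<longlongrightarrow> 0) at_top"
proof -
  have L: "((\<lambda>y::real. \<Sum>i\<le>degree q. coeff q i * (y powr (a + real i) * exp (-y))) \<longlongrightarrow> 0) at_top"
    using tendsto_sum[of "{..degree q}" "\<lambda>i y. coeff q i * (y powr (a + real i) * exp (-y))" "\<lambda>_. 0"]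
      tendsto_mult_right_zero[OF lim_pow] by simp
  have ev: "eventually (\<lambda>y. (\<Sum>i\<le>degree q. coeff q i * (y powr (a + real i) * exp (-y)))
     = y powr a * poly q y * exp (-y)) at_top"
    using eventually_gt_at_top[of 0]
    by eventually_elim (simp add: poly_altdef sum_distrib_left sum_distrib_right powr_add powr_realpow algebra_simps)
  show ?thesis using tendsto_cong[OF ev] L by simp
qed

lemma lim0_E: assumes "a > 0" shows "((\<lambda>y::real. y powr a * poly q y * exp (-y)) \<longlongrightarrow> 0) (at_right 0)"
proof -
  have "((\<lambda>y::real. y powr a) \<longlongrightarrow> 0) (at_right 0)"
    using assms by (intro tendsto_zero_powrI tendsto_ident_at) (auto simp: eventually_at_right_less less_imp_le eventually_at_filter)
  then have "((\<lambda>y::real. y powr a * poly q y * exp (-y)) \<longlongrightarrow> 0 * poly q 0 * exp (-0)) (at_right 0)"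
    by (intro tendsto_intros) (auto intro!: tendsto_intros)
  then show ?thesis by simp
qed

definition DD :: "real \<Rightarrow> real poly \<Rightarrow> real \<Rightarrow> real" where
  "DD a q y = a * (y powr (a - 1) * poly q y * exp (-y)) + y powr a * poly (pderiv q - q) y * exp (-y)"

lemma DD_deriv: assumes "x > 0"
  shows "((\<lambda>y. y powr a * poly q y * exp (-y)) has_real_derivative DD a q x) (at x)"
proof -
  have d1: "((\<lambda>y. y powr a) has_real_derivative a * x powr (a - 1)) (at x)"
    using has_real_derivative_powr[OF assms] .
  have d3: "((\<lambda>y. exp (-y)) has_real_derivative exp (-x) * (-1)) (at x)"
    by (rule DERIV_chain2[OF DERIV_exp]) (auto intro!: derivative_eq_intros)
  have "((\<lambda>y. y powr a * poly q y * exp (-y)) has_real_derivative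
     (a * x powr (a - 1) * poly q x + x powr a * poly (pderiv q) x) * exp (-x) + x powr a * poly q x * (exp (-x) * (-1))) (at x)"
    by (rule DERIV_cong[OF DERIV_mult[OF DERIV_mult[OF d1 poly_DERIV] d3]]) (simp add: algebra_simps)
  then show ?thesis
    by (rule DERIV_cong) (simp add: DD_def algebra_simps)
qed

lemma DD_int: assumes "a > 0" shows "set_integrable lborel {0..} (DD a q)"
proof -
  have "set_integrable lborel {0..} (\<lambda>y. a * (y powr (a - 1) * poly q y * exp (-y)))"
    using int_E[of "a - 1" q] assms by (intro set_integrable_mult_right) auto
  moreover have "set_integrable lborel {0..} (\<lambda>y. y powr a * poly (pderiv q - q) y * exp (-y))"
    by (rule int_E) (use assms in simp)
  ultimately show ?thesis unfolding DD_def[abs_def] by (rule set_integral_add)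
qed

lemma FTC1: assumes "a > 0" "t > 0"
  shows "(LINT y:{0..t}|lborel. DD a q y) = t powr a * poly q t * exp (-t)"
proof -
  have "(LBINT y=ereal 0..ereal t. DD a q y) = t powr a * poly q t * exp (-t) - 0"
  proof (rule interval_integral_FTC_integrable[where F = "\<lambda>y. y powr a * poly q y * exp (-y)"])
    show "ereal 0 < ereal t" using assms by simp
    show "((\<lambda>y. y powr a * poly q y * exp (-y)) has_vector_derivative DD a q x) (at x)"
      if "ereal 0 < ereal x" "ereal x < ereal t" for x
      using DD_deriv[of x a q] that by (simp add: has_real_derivative_iff_has_vector_derivative)
    show "isCont (DD a q) x" if "ereal 0 < ereal x" "ereal x < ereal t" for x
    proof -
      have x: "x > 0" using that by simp
      have c: "isCont (\<lambda>y. y powr b) x" for b using DERIV_isCont[OF has_real_derivative_powr[OF x]] .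
      show ?thesis unfolding DD_def
        by (intro isCont_add isCont_mult continuous_const c poly_isCont isCont_exp' isCont_minus continuous_ident)
    qed
    show "set_integrable lborel (einterval (ereal 0) (ereal t)) (DD a q)"
      by (rule set_integrable_subset[OF DD_int[OF assms(1)]]) (auto simp: einterval_def)
    show "(((\<lambda>y. y powr a * poly q y * exp (-y)) \<circ> real_of_ereal) \<longlongrightarrow> 0) (at_right (ereal 0))"
      unfolding at_right_ereal filterlim_filtermap o_def using lim0_E[OF assms(1)] by simp
    show "(((\<lambda>y. y powr a * poly q y * exp (-y)) \<circ> real_of_ereal) \<longlongrightarrow> t powr a * poly q t * exp (-t)) (at_left (ereal t))"
      unfolding at_left_ereal filterlim_filtermap o_def real_of_ereal.simps
      using DERIV_isCont[OF DD_deriv[OF assms(2)], unfolded isCont_def]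
      by (rule tendsto_mono[rotated]) (rule at_le, simp)
  qed
  then show ?thesis using assms by (simp add: interval_integral_Icc)
qed

lemma FTC2: assumes "a > 0" "t > 0"
  shows "(LINT y:{t<..}|lborel. DD a q y) = - (t powr a * poly q t * exp (-t))"
proof -
  have "(LBINT y=ereal t..\<infinity>. DD a q y) = 0 - t powr a * poly q t * exp (-t)"
  proof (rule interval_integral_FTC_integrable[where F = "\<lambda>y. y powr a * poly q y * exp (-y)"])
    show "ereal t < \<infinity>" by simp
    show "((\<lambda>y. y powr a * poly q y * exp (-y)) has_vector_derivative DD a q x) (at x)"
      if "ereal t < ereal x" "ereal x < \<infinity>" for x
      using DD_deriv[of x a q] that assms by (simp add: has_real_derivative_iff_has_vector_derivative)
    show "isCont (DD a q) x" if "ereal t < ereal x" "ereal x < \<infinity>" for x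
    proof -
      have x: "x > 0" using that assms by simp
      have c: "isCont (\<lambda>y. y powr b) x" for b using DERIV_isCont[OF has_real_derivative_powr[OF x]] .
      show ?thesis unfolding DD_def
        by (intro isCont_add isCont_mult continuous_const c poly_isCont isCont_exp' isCont_minus continuous_ident)
    qed
    show "set_integrable lborel (einterval (ereal t) \<infinity>) (DD a q)"
      by (rule set_integrable_subset[OF DD_int[OF assms(1)]]) (use assms in \<open>auto simp: einterval_def\<close>)
    show "(((\<lambda>y. y powr a * poly q y * exp (-y)) \<circ> real_of_ereal) \<longlongrightarrow> 0) (at_left \<infinity>)"
      unfolding at_left_PInf filterlim_filtermap o_def using lim_E by simp
    show "(((\<lambda>y. y powr a * poly q y * exp (-y)) \<circ> real_of_ereal) \<longlongrightarrow> t powr a * poly q t * exp (-t)) (at_right (ereal t))"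
      unfolding at_right_ereal filterlim_filtermap o_def real_of_ereal.simps
      using DERIV_isCont[OF DD_deriv[OF assms(2)], unfolded isCont_def]
      by (rule tendsto_mono[rotated]) (rule at_le, simp)
  qed
  then show ?thesis by (simp add: interval_integral_to_infinity_eq)
qed

lemma split_int:
  assumes f: "set_integrable lborel {0..} f" and t: "t > 0"
  shows "(LINT y:{0..}|lborel. f y * (A + B * heaviside (y - t))) =
     A * (LINT y:{0..t}|lborel. f y) + (A + B) * (LINT y:{t<..}|lborel. f y)"
proof -
  have f1: "set_integrable lborel {0..t} f" by (rule set_integrable_subset[OF f]) auto
  have f2: "set_integrable lborel {t<..} f" by (rule set_integrable_subset[OF f]) (use t in auto)
  have e1: "set_integrable lborel {0..t} (\<lambda>y. f y * (A + B * heaviside (y - t))) =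
     set_integrable lborel {0..t} (\<lambda>y. A * f y)"
    by (rule set_integrable_cong) (auto simp: heaviside_def)
  have e2: "set_integrable lborel {t<..} (\<lambda>y. f y * (A + B * heaviside (y - t))) =
     set_integrable lborel {t<..} (\<lambda>y. (A + B) * f y)"
    by (rule set_integrable_cong) (auto simp: heaviside_def)
  have i1: "set_integrable lborel {0..t} (\<lambda>y. f y * (A + B * heaviside (y - t)))"
    unfolding e1 using f1 by (intro set_integrable_mult_right)
  have i2: "set_integrable lborel {t<..} (\<lambda>y. f y * (A + B * heaviside (y - t)))"
    unfolding e2 using f2 by (intro set_integrable_mult_right)
  have U: "{0..} = {0..t} \<union> {t<..}" using t by auto
  have "(LINT y:{0..}|lborel. f y * (A + B * heaviside (y - t))) =
     (LINT y:{0..t}|lborel. f y * (A + B * heaviside (y - t))) + (LINT y:{t<..}|lborel. f y * (A + B * heaviside (y - t)))"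
    unfolding U by (rule set_integral_Un[OF _ i1 i2]) auto
  also have "(LINT y:{0..t}|lborel. f y * (A + B * heaviside (y - t))) = (LINT y:{0..t}|lborel. A * f y)"
    by (rule set_lebesgue_integral_cong) (auto simp: heaviside_def)
  also have "(LINT y:{t<..}|lborel. f y * (A + B * heaviside (y - t))) = (LINT y:{t<..}|lborel. (A + B) * f y)"
    by (rule set_lebesgue_integral_cong) (auto simp: heaviside_def)
  finally show ?thesis by simp
qed

definition WW :: "real \<Rightarrow> real \<Rightarrow> real \<Rightarrow> real \<Rightarrow> real poly \<Rightarrow> real" where
  "WW a A B t q = (LINT y:{0..}|lborel. poly q y * wt a A B t y)"

definition S1 :: "real \<Rightarrow> real \<Rightarrow> real poly \<Rightarrow> real" where
  "S1 a t q = (LINT y:{0..t}|lborel. y powr a * poly q y * exp (-y))"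
definition S2 :: "real \<Rightarrow> real \<Rightarrow> real poly \<Rightarrow> real" where
  "S2 a t q = (LINT y:{t<..}|lborel. y powr a * poly q y * exp (-y))"

lemma WW_split: assumes "a > 0" "t > 0"
  shows "WW a A B t q = A * S1 a t q + (A + B) * S2 a t q"
proof -
  have "WW a A B t q = (LINT y:{0..}|lborel. (y powr a * poly q y * exp (-y)) * (A + B * heaviside (y - t)))"
    unfolding WW_def wt_def w0_def by (simp add: algebra_simps)
  also have "\<dots> = A * S1 a t q + (A + B) * S2 a t q"
    unfolding S1_def S2_def by (rule split_int[OF int_E]) (use assms in auto)
  finally show ?thesis .
qed

lemma S1_add: assumes "a > 0" "t > 0" shows "S1 a t (p + q) = S1 a t p + S1 a t q"
proof -
  have ip: "set_integrable lborel {0..t} (\<lambda>y. y powr a * poly p y * exp (-y))" for p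
    by (rule set_integrable_subset[OF int_E]) (use assms in auto)
  show ?thesis unfolding S1_def
    using set_integral_add(2)[OF ip ip, of p q] by (simp add: algebra_simps)
qed

lemma S2_add: assumes "a > 0" "t > 0" shows "S2 a t (p + q) = S2 a t p + S2 a t q"
proof -
  have ip: "set_integrable lborel {t<..} (\<lambda>y. y powr a * poly p y * exp (-y))" for p
    by (rule set_integrable_subset[OF int_E]) (use assms in auto)
  show ?thesis unfolding S2_def
    using set_integral_add(2)[OF ip ip, of p q] by (simp add: algebra_simps)
qed

lemma S1_smult: "S1 a t (smult c p) = c * S1 a t p"
  unfolding S1_def by (simp add: algebra_simps)
lemma S2_smult: "S2 a t (smult c p) = c * S2 a t p"
  unfolding S2_def by (simp add: algebra_simps)

lemma WW_add: assumes "a > 0" "t > 0" shows "WW a A B t (p + q) = WW a A B t p + WW a A B t q"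
  using assms by (simp add: WW_split S1_add S2_add algebra_simps)
lemma WW_smult: assumes "a > 0" "t > 0" shows "WW a A B t (smult c p) = c * WW a A B t p"
  using assms by (simp add: WW_split S1_smult S2_smult algebra_simps)
lemma WW_diff: assumes "a > 0" "t > 0" shows "WW a A B t (p - q) = WW a A B t p - WW a A B t q"
proof -
  have "WW a A B t (p - q) + WW a A B t q = WW a A B t p"
    using WW_add[OF assms, where p="p - q" and q=q and A=A and B=B] by simp
  then show ?thesis by simp
qed

lemma DD_split: assumes "a > 0" and S: "S \<subseteq> {0..}" "S \<in> sets lborel"
  shows "(LINT y:S|lborel. DD a q y) = a * (LINT y:S|lborel. y powr (a - 1) * poly q y * exp (-y))
     + (LINT y:S|lborel. y powr a * poly (pderiv q - q) y * exp (-y))"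
proof -
  have i1: "set_integrable lborel S (\<lambda>y. a * (y powr (a - 1) * poly q y * exp (-y)))"
    by (rule set_integrable_subset[OF _ S(2,1)], rule set_integrable_mult_right, rule int_E) (use assms in auto)
  have i2: "set_integrable lborel S (\<lambda>y. y powr a * poly (pderiv q - q) y * exp (-y))"
    by (rule set_integrable_subset[OF int_E S(2,1)]) (use assms in auto)
  show ?thesis unfolding DD_def using set_integral_add(2)[OF i1 i2] by simp
qed

lemma IBP: assumes a: "a > 0" and t: "t > 0"
  shows "a * (LINT y:{0..}|lborel. (y powr (a - 1) * poly Q y * exp (-y)) * (A + B * heaviside (y - t)))
     = - B * (t powr a * poly Q t * exp (-t)) + WW a A B t (Q - pderiv Q)"
proof -
  define G where "G = t powr a * poly Q t * exp (-t)"
  define L1 where "L1 = (LINT y:{0..t}|lborel. y powr (a - 1) * poly Q y * exp (-y))"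
  define L2 where "L2 = (LINT y:{t<..}|lborel. y powr (a - 1) * poly Q y * exp (-y))"
  have sp: "(LINT y:{0..}|lborel. (y powr (a - 1) * poly Q y * exp (-y)) * (A + B * heaviside (y - t)))
     = A * L1 + (A + B) * L2"
    unfolding L1_def L2_def by (rule split_int[OF int_E]) (use a t in auto)
  have f1: "a * L1 + S1 a t (pderiv Q - Q) = G"
    using FTC1[OF a t, of Q] DD_split[OF a, of "{0..t}" Q] unfolding L1_def S1_def G_def by simp
  have sub: "{t<..} \<subseteq> {0..}" using t by auto
  have f2: "a * L2 + S2 a t (pderiv Q - Q) = - G"
    using FTC2[OF a t, of Q] DD_split[OF a sub, of Q] unfolding L2_def S2_def G_def by simp
  have m: "Q - pderiv Q = smult (-1) (pderiv Q - Q)" by simp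
  have "WW a A B t (Q - pderiv Q) = - A * S1 a t (pderiv Q - Q) - (A + B) * S2 a t (pderiv Q - Q)"
    unfolding WW_split[OF a t] m S1_smult S2_smult by simp
  then show ?thesis unfolding sp G_def[symmetric] using f1 f2 by algebra
qed

lemma OPS_orth: assumes "monic_OPS a A B t P" "i \<noteq> j"
  shows "WW a A B t (P i * P j) = 0"
  using assms unfolding monic_OPS_def WW_def by (simp add: mult.assoc)

lemma orth_aux: assumes a: "a > 0" and t: "t > 0" and P: "monic_OPS a A B t P"
  shows "(\<forall>i\<ge>d. coeff r i = 0) \<Longrightarrow> d \<le> m \<Longrightarrow> WW a A B t (P m * r) = 0"
proof (induction d arbitrary: r)
  case 0
  then have "r = 0" by (intro poly_eqI) simp
  then show ?case by (simp add: WW_def)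
next
  case (Suc d)
  define r' where "r' = r - smult (coeff r d) (P d)"
  have dd: "degree (P d) = d \<and> lead_coeff (P d) = 1" using P unfolding monic_OPS_def by blast
  then have deg: "degree (P d) = d" "coeff (P d) d = 1" by auto
  have "coeff r' i = 0" if "i \<ge> d" for i
  proof (cases "i = d")
    case True then show ?thesis using deg by (simp add: r'_def)
  next
    case False
    then have "i > d" using that by simp
    then have "coeff (P d) i = 0" using deg by (simp add: coeff_eq_0)
    then show ?thesis using Suc.prems \<open>i > d\<close> by (simp add: r'_def)
  qed
  then have IH: "WW a A B t (P m * r') = 0" using Suc.IH Suc.prems by simp
  have "P m * r = P m * r' + smult (coeff r d) (P m * P d)" by (simp add: r'_def algebra_simps)
  then have "WW a A B t (P m * r) = WW a A B t (P m * r') + coeff r d * WW a A B t (P m * P d)"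
    using WW_add[OF a t] WW_smult[OF a t] by simp
  also have "WW a A B t (P m * P d) = 0" using OPS_orth[OF P] Suc.prems by simp
  finally show ?case using IH by simp
qed

lemma S2_pos: assumes a: "a > 0" and t: "t > 0" and p: "p \<noteq> 0"
  shows "S2 a t (p * p) > 0"
proof -
  define g where "g y = indicator {t<..} y *\<^sub>R (y powr a * poly (p * p) y * exp (-y))" for y
  have int: "integrable lborel g"
  proof -
    have sub: "{t<..} \<subseteq> {0..}" using t by auto
    show ?thesis
      unfolding g_def using set_integrable_subset[OF int_E[of a "p * p"] _ sub] a
      by (auto simp: set_integrable_def)
  qed
  have nn: "0 \<le> g y" for y by (simp add: g_def indicator_def)
  have ge: "S2 a t (p * p) \<ge> 0" unfolding S2_def set_lebesgue_integral_def g_def[symmetric]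
    using nn by simp
  have "S2 a t (p * p) \<noteq> 0"
  proof
    assume "S2 a t (p * p) = 0"
    then have "integral\<^sup>L lborel g = 0" unfolding S2_def set_lebesgue_integral_def g_def .
    then have ae: "AE y in lborel. g y = 0" using integral_nonneg_eq_0_iff_AE[OF int] nn by simp
    have ae2: "AE y in lborel. y \<notin> {y. poly p y = 0}"
      by (rule AE_not_in, rule finite_imp_null_set_lborel, rule poly_roots_finite[OF p])
    have "AE y in lborel. y \<notin> {t<..<t+1}"
      using ae ae2
    proof eventually_elim
      case (elim y)
      show ?case
      proof
        assume y: "y \<in> {t<..<t+1}"
        then have "y > 0" using t by simp
        moreover have "poly p y * poly p y > 0" using elim(2) by (simp add: zero_less_mult_iff) linarith
        ultimately have "g y > 0" using y by (simp add: g_def indicator_def)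
        then show False using elim(1) by simp
      qed
    qed
    then have "emeasure lborel {t<..<t+1} = 0"
      by (subst (asm) AE_iff_measurable[of "{t<..<t+1}"]) auto
    then show False by simp
  qed
  then show ?thesis using ge by simp
qed

lemma S1_nonneg: "S1 a t (p * p) \<ge> 0"
  unfolding S1_def set_lebesgue_integral_def by (intro integral_nonneg_AE) (simp add: indicator_def)

lemma WW_pos: assumes a: "a > 0" and t: "t > 0" and A: "A \<ge> 0" and B: "B > 0" and p: "p \<noteq> 0"
  shows "WW a A B t (p * p) > 0"
proof -
  have "A * S1 a t (p * p) \<ge> 0" using A S1_nonneg by simp
  moreover have "(A + B) * S2 a t (p * p) > 0" using A B S2_pos[OF a t p] by simp
  ultimately show ?thesis unfolding WW_split[OF a t] by linarith
qed

lemma pt_eq: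
  fixes z :: complex and y a K :: real
  assumes y: "y > 0" and z: "z \<noteq> 0" and zy: "z \<noteq> complex_of_real y"
  shows "((v0' a z - v0' a (complex_of_real y)) / (z - complex_of_real y)) * complex_of_real (y * K)
    = complex_of_real (a * K) / z"
proof -
  have y': "complex_of_real y \<noteq> 0" using y by simp
  have d: "z - complex_of_real y \<noteq> 0" using zy by simp
  have e: "(v0' a z - v0' a (complex_of_real y)) = complex_of_real a * (z - complex_of_real y) / (z * complex_of_real y)"
    unfolding v0'_def using z y' by (simp add: field_simps)
  show ?thesis unfolding e using z y' d by (simp add: field_simps)
qed

lemma conv:
  fixes z :: complex
  assumes a: "a > 0" and z: "z \<noteq> 0"
  shows "(LINT y:{0..}|lborel. ((v0' a z - v0' a (complex_of_real y)) / (z - complex_of_real y))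
            * complex_of_real (poly Q y * wt a A B t y))
     = complex_of_real (a * (LINT y:{0..}|lborel. (y powr (a - 1) * poly Q y * exp (-y)) * (A + B * heaviside (y - t)))) / z"
proof -
  have "(LINT y:{0..}|lborel. ((v0' a z - v0' a (complex_of_real y)) / (z - complex_of_real y))
            * complex_of_real (poly Q y * wt a A B t y))
     = (LINT y:{0..}|lborel. complex_of_real (a * ((y powr (a - 1) * poly Q y * exp (-y)) * (A + B * heaviside (y - t)))) / z)"
    unfolding set_lebesgue_integral_def
  proof (rule integral_discrete_difference[where X = "{Re z}"])
    fix y :: real assume "y \<notin> {Re z}"
    then have yz: "z \<noteq> complex_of_real y" by auto
    show "indicator {0..} y *\<^sub>R (((v0' a z - v0' a (complex_of_real y)) / (z - complex_of_real y))
            * complex_of_real (poly Q y * wt a A B t y)) =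
          indicator {0..} y *\<^sub>R (complex_of_real (a * ((y powr (a - 1) * poly Q y * exp (-y)) * (A + B * heaviside (y - t)))) / z)"
    proof (cases "y > 0")
      case True
      define K where "K = (y powr (a - 1) * poly Q y * exp (-y)) * (A + B * heaviside (y - t))"
      have e: "poly Q y * wt a A B t y = y * K"
        using True unfolding wt_def w0_def K_def by (simp add: powr_diff field_simps)
      have i: "indicator {0..} y = (1::real)" using True by simp
      show ?thesis unfolding i e K_def[symmetric] scaleR_one by (rule pt_eq[OF True z yz])
    next
      case False
      then show ?thesis by (cases "y = 0") (auto simp: indicator_def wt_def w0_def)
    qed
  qed auto
  also have "\<dots> = complex_of_real (a * (LINT y:{0..}|lborel. (y powr (a - 1) * poly Q y * exp (-y)) * (A + B * heaviside (y - t)))) / z"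
    by (simp only: set_integral_divide_zero set_integral_complex_of_real set_integral_mult_right)
  finally show ?thesis .
qed

theorem lemma5:
  fixes \<alpha> A B t :: real and P :: "nat \<Rightarrow> real poly" and n :: nat and z :: complex
  assumes "\<alpha> > 0" and "A \<ge> 0" and "B > 0" and "t > 0"
    and "monic_OPS \<alpha> A B t P"
    and "n \<ge> 1"
    and "z \<noteq> 0" and "z \<noteq> complex_of_real t"
  shows "An \<alpha> A B t P n z =
           complex_of_real (Rn \<alpha> A B t P n) / (z - complex_of_real t)
           + (1 - complex_of_real (Rn \<alpha> A B t P n)) / z \<and>
         Bn \<alpha> A B t P n z =
           complex_of_real (rn \<alpha> A B t P n) / (z - complex_of_real t)
           - (of_nat n + complex_of_real (rn \<alpha> A B t P n)) / z"
proof -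
  note a = assms(1) and A = assms(2) and B = assms(3) and t = assms(4) and P = assms(5)
    and n = assms(6) and z = assms(7)
  have mon: "degree (P m) = m" "lead_coeff (P m) = 1" for m
    using P unfolding monic_OPS_def by blast+
  have Pne: "P m \<noteq> 0" for m using mon(2)[of m] by auto
  have hW: "hn \<alpha> A B t P m = WW \<alpha> A B t (P m * P m)" for m
    unfolding hn_def WW_def by (simp add: power2_eq_square)
  have hpos: "hn \<alpha> A B t P m > 0" for m unfolding hW by (rule WW_pos[OF a t A B Pne])
  define Ig where "Ig Q = (LINT y:{0..}|lborel. (y powr (\<alpha> - 1) * poly Q y * exp (-y)) * (A + B * heaviside (y - t)))" for Q
  have ibp: "\<alpha> * Ig Q = - B * (t powr \<alpha> * poly Q t * exp (-t)) + (WW \<alpha> A B t Q - WW \<alpha> A B t (pderiv Q))" for Q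
    unfolding Ig_def IBP[OF a t] WW_diff[OF a t] ..
  have W_add: "WW \<alpha> A B t (p + q) = WW \<alpha> A B t p + WW \<alpha> A B t q" for p q by (rule WW_add[OF a t])
  have W_smult: "WW \<alpha> A B t (smult c p) = c * WW \<alpha> A B t p" for c p by (rule WW_smult[OF a t])
  have orth: "WW \<alpha> A B t (P m * r) = 0" if "\<forall>i\<ge>d. coeff r i = 0" "d \<le> m" for r d m
    using orth_aux[OF a t P] that by blast
  have w0t: "w0 \<alpha> t = t powr \<alpha> * exp (-t)" by (simp add: w0_def)
  define h where "h = hn \<alpha> A B t P n"
  have h0: "h \<noteq> 0" using hpos[of n] by (simp add: h_def)
  have "WW \<alpha> A B t (P n * pderiv (P n)) = 0"
    by (rule orth[of n]) (auto simp: coeff_pderiv mon coeff_eq_0)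
  then have d1: "WW \<alpha> A B t (pderiv (P n * P n)) = 0"
    unfolding pderiv_mult W_add by simp
  have IA: "\<alpha> * Ig (P n * P n) = h - B * w0 \<alpha> t * (poly (P n) t)\<^sup>2"
    unfolding ibp d1 h_def hW w0t by (simp add: power2_eq_square algebra_simps)
  have intA: "(LINT y:{0..}|lborel. ((v0' \<alpha> z - v0' \<alpha> (complex_of_real y)) / (z - complex_of_real y))
            * complex_of_real ((poly (P n) y)\<^sup>2 * wt \<alpha> A B t y))
     = complex_of_real (\<alpha> * Ig (P n * P n)) / z"
    unfolding Ig_def using conv[OF a z, of "P n * P n" A B t] by (simp add: power2_eq_square)
  have partA: "An \<alpha> A B t P n z =
           complex_of_real (Rn \<alpha> A B t P n) / (z - complex_of_real t)
           + (1 - complex_of_real (Rn \<alpha> A B t P n)) / z"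
  proof -
    have "An \<alpha> A B t P n z = complex_of_real (Rn \<alpha> A B t P n) / (z - complex_of_real t)
       + (1 / complex_of_real h) * (complex_of_real (h - B * w0 \<alpha> t * (poly (P n) t)\<^sup>2) / z)"
      unfolding An_def intA IA h_def ..
    also have "(1 / complex_of_real h) * (complex_of_real (h - B * w0 \<alpha> t * (poly (P n) t)\<^sup>2) / z)
       = (1 - complex_of_real (Rn \<alpha> A B t P n)) / z"
      unfolding Rn_def h_def[symmetric] using h0 z by (simp add: field_simps)
    finally show ?thesis .
  qed
  define h' where "h' = hn \<alpha> A B t P (n - 1)"
  have h0': "h' \<noteq> 0" using hpos[of "n - 1"] by (simp add: h'_def)
  have nn: "n - 1 \<noteq> n" using n by simp
  have W0: "WW \<alpha> A B t (P n * P (n - 1)) = 0" using OPS_orth[OF P nn[symmetric]] .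
  have Wa: "WW \<alpha> A B t (P n * pderiv (P (n - 1))) = 0"
    by (rule orth[of n]) (auto simp: coeff_pderiv mon coeff_eq_0)
  define D where "D = pderiv (P n) - smult (of_nat n) (P (n - 1))"
  have cD: "\<forall>i\<ge>n - 1. coeff D i = 0"
  proof (intro allI impI)
    fix i assume i: "n - 1 \<le> i"
    show "coeff D i = 0"
    proof (cases "i = n - 1")
      case True
      then have "Suc i = n" using n by simp
      then show ?thesis using True mon[of n] mon[of "n - 1"] by (simp add: D_def coeff_pderiv)
    next
      case False
      then have "i \<ge> n" using i by simp
      have "coeff (P (n - 1)) i = 0" using \<open>i \<ge> n\<close> n by (intro coeff_eq_0) (simp add: mon)
      then show ?thesis using \<open>i \<ge> n\<close> by (simp add: D_def coeff_pderiv mon coeff_eq_0)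
    qed
  qed
  have WD0: "WW \<alpha> A B t (P (n - 1) * D) = 0" by (rule orth[OF cD]) simp
  then have WD: "WW \<alpha> A B t (D * P (n - 1)) = 0" "WW \<alpha> A B t (P (n - 1) * D) = 0" by (simp_all add: mult.commute)
  have eqb: "P (n - 1) * pderiv (P n) = smult (of_nat n) (P (n - 1) * P (n - 1)) + P (n - 1) * D"
    by (simp add: D_def algebra_simps)
  have Wb: "WW \<alpha> A B t (P (n - 1) * pderiv (P n)) = of_nat n * h'"
    unfolding eqb W_add W_smult WD0 h'_def hW by simp
  have d2: "WW \<alpha> A B t (pderiv (P n * P (n - 1))) = of_nat n * h'"
    unfolding pderiv_mult W_add Wa Wb by simp
  have IB: "\<alpha> * Ig (P n * P (n - 1)) = - B * w0 \<alpha> t * poly (P n) t * poly (P (n - 1)) t - of_nat n * h'"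
    unfolding ibp d2 W0 w0t by (simp add: algebra_simps)
  have intB: "(LINT y:{0..}|lborel. ((v0' \<alpha> z - v0' \<alpha> (complex_of_real y)) / (z - complex_of_real y))
            * complex_of_real (poly (P n) y * poly (P (n - 1)) y * wt \<alpha> A B t y))
     = complex_of_real (\<alpha> * Ig (P n * P (n - 1))) / z"
    unfolding Ig_def using conv[OF a z, of "P n * P (n - 1)" A B t] by (simp add: mult.assoc)
  have partB: "Bn \<alpha> A B t P n z =
           complex_of_real (rn \<alpha> A B t P n) / (z - complex_of_real t)
           - (of_nat n + complex_of_real (rn \<alpha> A B t P n)) / z"
  proof -
    have "Bn \<alpha> A B t P n z = complex_of_real (rn \<alpha> A B t P n) / (z - complex_of_real t)
       + (1 / complex_of_real h') * (complex_of_real (- B * w0 \<alpha> t * poly (P n) t * poly (P (n - 1)) t - of_nat n * h') / z)"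
      unfolding Bn_def intB IB h'_def ..
    also have "(1 / complex_of_real h') * (complex_of_real (- B * w0 \<alpha> t * poly (P n) t * poly (P (n - 1)) t - of_nat n * h') / z)
       = - (of_nat n + complex_of_real (rn \<alpha> A B t P n)) / z"
      unfolding rn_def h'_def[symmetric] using h0' z by (simp add: field_simps)
    finally show ?thesis by (metis diff_conv_add_uminus minus_divide_left)
  qed
  show ?thesis using partA partB by blast
qed

end
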